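(* For every complex $s$ with $\Re(s)>2$, \[\sum_{k=1}^\infty (-1)^{k-1}k\,\zeta(s,k)=2^{-s}\Big\{\zeta\big(s-1,\tfrac12\big)+\tfrac12 \zeta\big(s,\tfrac12\big)-\zeta(s-1)\Big\}.\]
   Context: $\zeta(s,\alpha)=\sum_{n=0}^\infty (n+\alpha)^{-s}$ denotes the Hurwitz zeta function ($\Re(s)>1$, $\alpha>0$), and $\zeta(s)=\zeta(s,1)$ is the Riemann zeta function. *)

theory Defs
  imports "HOL-Analysis.Analysis"
begin

text \<open>Hurwitz zeta function, defined by its Dirichlet series, meant for Re s > 1 and a > 0.\<close>
definition hurwitz_zeta :: "real \<Rightarrow> complex \<Rightarrow> complex" where
  "hurwitz_zeta a s = (\<Sum>n. (of_real (real n + a)) powr (- s))"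

definition riemann_zeta :: "complex \<Rightarrow> complex" where
  "riemann_zeta s = hurwitz_zeta 1 s"

end

theory Submission
  imports Defs
begin

lemma hz_summable_norm:
  assumes "a > 0" "Re w > 1"
  shows "summable (\<lambda>n. norm ((of_real (real n + a) :: complex) powr (-w)))"
proof -
  have eq: "norm ((of_real (real n + a) :: complex) powr (-w)) = (real n + a) powr (- Re w)" for n
    using assms by (subst norm_powr_real_powr) auto
  have "summable (\<lambda>n. real n powr (- Re w))" using assms by (subst summable_real_powr_iff) auto
  then show ?thesis unfolding eq
    apply (rule summable_comparison_test_ev[rotated])
    using eventually_gt_at_top[of "0::nat"] apply eventually_elim
    using assms by (auto intro!: powr_mono2')
qed

lemma powr_m1:
  assumes "x > 0"
  shows "(of_real x::complex) powr (-(w-1)) = of_real x * of_real x powr (-w)"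
proof -
  have a: "(of_real x::complex) powr (-w + 1) = of_real x powr (-w) * of_real x"
    by (simp only: powr_add powr_to_1)
  have b: "-(w-1) = -w + 1" by simp
  show ?thesis unfolding b a by (simp only: mult.commute)
qed

lemma tail_zero:
  assumes "summable (h :: nat \<Rightarrow> real)"
  shows "(\<lambda>N. \<Sum>n. h (n + N)) \<longlonglongrightarrow> 0"
proof -
  have "(\<lambda>N. suminf h - sum h {..<N}) \<longlonglongrightarrow> suminf h - suminf h"
    by (intro tendsto_diff tendsto_const summable_LIMSEQ assms)
  then show ?thesis using suminf_minus_initial_segment[OF assms] by simp
qed

theorem mainTheorem8:
  fixes s :: complex
  assumes "Re s > 2"
  shows "(\<lambda>j::nat. let k = j + 1 in (-1) ^ (k - 1) * of_nat k * hurwitz_zeta (real k) s) sums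
           (2 powr (- s) * (hurwitz_zeta (1/2) (s - 1) + (1/2) * hurwitz_zeta (1/2) s
              - riemann_zeta (s - 1)))"
proof -
  define f where "f m = (of_real (real m) :: complex) powr (-s)" for m
  define T where "T k = hurwitz_zeta (real k) s" for k :: nat
  define c :: "nat \<Rightarrow> complex" where "c m = (if even m then -(of_nat m)/2 else (of_nat m + 1)/2)" for m
  define b where "b j = c (Suc j) * f (Suc j)" for j
  have s1: "Re s > 1" "Re (s - 1) > 1" using assms by auto
  have Tstep: "T k = f k + T (Suc k)" if "k > 0" for k
  proof -
    let ?g = "\<lambda>n. (of_real (real n + real k) :: complex) powr (-s)"
    have sg: "summable ?g"
      using hz_summable_norm[of "real k" s] that s1 summable_norm_cancel by auto
    have "T (Suc k) = (\<Sum>n. ?g (Suc n))"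
      unfolding T_def hurwitz_zeta_def by (simp add: add_ac)
    also have "\<dots> = suminf ?g - ?g 0" by (rule suminf_split_head[OF sg])
    finally show ?thesis unfolding T_def hurwitz_zeta_def f_def by simp
  qed
  have partial: "(\<Sum>j<N. let k = j + 1 in (-1) ^ (k - 1) * of_nat k * hurwitz_zeta (real k) s)
      = (\<Sum>j<N. b j) + c N * T (Suc N)" for N
  proof (induction N)
    case 0
    then show ?case by (simp add: c_def)
  next
    case (Suc N)
    have cs: "c N + (-1)^N * of_nat (Suc N) = c (Suc N)"
      by (cases "even N") (auto simp: c_def field_simps)
    have "(\<Sum>j<Suc N. let k = j + 1 in (-1) ^ (k - 1) * of_nat k * hurwitz_zeta (real k) s)
       = (\<Sum>j<N. b j) + (c N + (-1)^N * of_nat (Suc N)) * T (Suc N)"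
      using Suc by (simp add: Let_def T_def algebra_simps)
    also have "\<dots> = (\<Sum>j<N. b j) + c (Suc N) * (f (Suc N) + T (Suc (Suc N)))"
      using cs Tstep[of "Suc N"] by simp
    also have "\<dots> = (\<Sum>j<Suc N. b j) + c (Suc N) * T (Suc (Suc N))"
      by (simp add: b_def algebra_simps)
    finally show ?case .
  qed
  have normc: "norm (c m) \<le> real m" if "m > 0" for m
  proof (cases "even m")
    case False
    have "(of_nat m + 1 :: complex) = of_nat (Suc m)" by simp
    then have "norm (of_nat m + 1 :: complex) = real m + 1"
      by (simp only: norm_of_nat)
    with False that show ?thesis by (auto simp: c_def norm_divide)
  qed (use that in \<open>auto simp: c_def norm_divide\<close>)
  have fm1: "of_nat m * f m = (of_real (real m) :: complex) powr (-(s-1))" if "m > 0" for m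
    using powr_m1[of "real m" s] that by (simp add: f_def)
  have bsum: "summable b"
  proof (rule summable_comparison_test[OF _ hz_summable_norm[of 1 "s-1"]])
    show "\<exists>N. \<forall>n\<ge>N. norm (b n) \<le> norm ((of_real (real n + 1) :: complex) powr (-(s-1)))"
    proof (intro exI allI impI)
      fix n :: nat
      have "norm (b n) = norm (c (Suc n)) * norm (f (Suc n))" by (simp add: b_def norm_mult)
      also have "\<dots> \<le> real (Suc n) * norm (f (Suc n))"
        by (intro mult_right_mono normc) auto
      also have "\<dots> = norm (of_nat (Suc n) * f (Suc n))" by (simp only: norm_mult norm_of_nat)
      also have "\<dots> = norm ((of_real (real n + 1) :: complex) powr (-(s-1)))"
        using fm1[of "Suc n"] by (simp add: add_ac)
      finally show "norm (b n) \<le> norm ((of_real (real n + 1) :: complex) powr (-(s-1)))" .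
    qed
  qed (use s1 in auto)
  define h where "h n = norm ((of_real (real n + 1) :: complex) powr (-(s-1)))" for n
  have hsum: "summable h" unfolding h_def using hz_summable_norm[of 1 "s-1"] s1 by auto
  have lim2: "(\<lambda>N. c N * T (Suc N)) \<longlonglongrightarrow> 0"
  proof (rule Lim_null_comparison[OF _ tail_zero[OF hsum]])
    show "\<forall>\<^sub>F N in sequentially. norm (c N * T (Suc N)) \<le> (\<Sum>n. h (n + N))"
    proof (rule always_eventually, intro allI)
      fix N :: nat
      let ?g = "\<lambda>n. (of_real (real n + real (Suc N)) :: complex) powr (-s)"
      have sg: "summable (\<lambda>n. norm (?g n))"
        using hz_summable_norm[of "real (Suc N)" s] s1 by auto
      have hN: "summable (\<lambda>n. h (n + N))" using hsum by (subst summable_iff_shift)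
      have "norm (c N * T (Suc N)) \<le> real (Suc N) * norm (T (Suc N))"
      proof -
        have "norm (c N) \<le> real (Suc N)"
          by (cases "N = 0") (use normc[of N] in \<open>auto simp: c_def\<close>)
        then show ?thesis unfolding norm_mult by (intro mult_right_mono) auto
      qed
      also have "norm (T (Suc N)) \<le> (\<Sum>n. norm (?g n))"
        unfolding T_def hurwitz_zeta_def by (rule summable_norm[OF sg])
      hence "real (Suc N) * norm (T (Suc N)) \<le> real (Suc N) * (\<Sum>n. norm (?g n))"
        by (intro mult_left_mono) auto
      also have "\<dots> = (\<Sum>n. real (Suc N) * norm (?g n))"
        by (rule suminf_mult[OF sg, symmetric])
      also have "\<dots> \<le> (\<Sum>n. h (n + N))"
      proof (rule suminf_le[OF _ summable_mult[OF sg] hN])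
        fix n
        have "real (Suc N) * norm (?g n) \<le> real (n + Suc N) * norm (?g n)"
          by (intro mult_right_mono) auto
        also have "\<dots> = norm (of_nat (n + Suc N) * f (n + Suc N))"
        proof -
          have "(of_real (real n + real (Suc N)) :: complex) = of_real (real (n + Suc N))" by simp
          then show ?thesis unfolding norm_mult norm_of_nat f_def by metis
        qed
        also have "\<dots> = h (n + N)"
          using fm1[of "n + Suc N"] by (simp add: h_def add_ac)
        finally show "real (Suc N) * norm (?g n) \<le> h (n + N)" .
      qed
      finally show "norm (c N * T (Suc N)) \<le> (\<Sum>n. h (n + N))" .
    qed
  qed
  have main: "(\<lambda>j::nat. let k = j + 1 in (-1) ^ (k - 1) * of_nat k * hurwitz_zeta (real k) s) sums suminf b"
    unfolding sums_def partial
    using tendsto_add[OF summable_LIMSEQ[OF bsum] lim2] by simp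
  define H where "H a w n = (of_real (real n + a) :: complex) powr (-w)" for a w n
  have Hs: "H a w sums hurwitz_zeta a w" if "a > 0" "Re w > 1" for a w
    unfolding H_def hurwitz_zeta_def
    by (rule summable_sums[OF summable_norm_cancel[OF hz_summable_norm[OF that]]])
  have rhs: "(\<lambda>n. 2 powr (-s) * (H (1/2) (s-1) n + 1/2 * H (1/2) s n - H 1 (s-1) n)) sums
      (2 powr (- s) * (hurwitz_zeta (1/2) (s - 1) + (1/2) * hurwitz_zeta (1/2) s
              - riemann_zeta (s - 1)))"
    unfolding riemann_zeta_def
    by (rule sums_mult, rule sums_diff, rule sums_add, rule Hs, simp, use s1 in simp,
        rule sums_mult, rule Hs, simp, use s1 in simp, rule Hs, simp, use s1 in simp)
  have grp: "(\<lambda>n. sum b {n * 2..<n * 2 + 2}) sums suminf b"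
    by (rule sums_group[OF summable_sums[OF bsum]]) auto
  have termeq: "sum b {n * 2..<n * 2 + 2} =
      2 powr (-s) * (H (1/2) (s-1) n + 1/2 * H (1/2) s n - H 1 (s-1) n)" for n
  proof -
    have e1: "(of_real (real n + 1/2) :: complex) powr (-(s-1)) = of_real (real n + 1/2) * of_real (real n + 1/2) powr (-s)"
      by (rule powr_m1) auto
    have e2: "(of_real (real n + 1) :: complex) powr (-(s-1)) = of_real (real n + 1) * of_real (real n + 1) powr (-s)"
      by (rule powr_m1) auto
    have e3: "2 powr (-s) * (of_real (real n + 1/2) :: complex) powr (-s) = f (Suc (2*n))"
    proof -
      have "(2 * of_real (real n + 1/2) :: complex) powr (-s) = 2 powr (-s) * (of_real (real n + 1/2)) powr (-s)"
        by (rule powr_times_real) auto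
      moreover have "(2 * of_real (real n + 1/2) :: complex) = of_real (real (Suc (2*n)))"
        by (simp add: field_simps)
      ultimately show ?thesis unfolding f_def by metis
    qed
    have e4: "2 powr (-s) * (of_real (real n + 1) :: complex) powr (-s) = f (Suc (Suc (2*n)))"
    proof -
      have "(2 * of_real (real n + 1) :: complex) powr (-s) = 2 powr (-s) * (of_real (real n + 1)) powr (-s)"
        by (rule powr_times_real) auto
      moreover have "(2 * of_real (real n + 1) :: complex) = of_real (real (Suc (Suc (2*n))))"
        by (simp add: field_simps)
      ultimately show ?thesis unfolding f_def by metis
    qed
    have "sum b {n * 2..<n * 2 + 2} = c (Suc (2*n)) * f (Suc (2*n)) + c (Suc (Suc (2*n))) * f (Suc (Suc (2*n)))"
      by (simp add: b_def numeral_2_eq_2 mult.commute)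
    also have "\<dots> = (of_nat n + 1) * f (Suc (2*n)) - (of_nat n + 1) * f (Suc (Suc (2*n)))"
      by (simp add: c_def field_simps)
    also have "\<dots> = 2 powr (-s) * (H (1/2) (s-1) n + 1/2 * H (1/2) s n - H 1 (s-1) n)"
      unfolding H_def e1 e2 e3[symmetric] e4[symmetric] by (simp add: algebra_simps)
    finally show ?thesis .
  qed
  have "suminf b = 2 powr (- s) * (hurwitz_zeta (1/2) (s - 1) + (1/2) * hurwitz_zeta (1/2) s
              - riemann_zeta (s - 1))"
    using sums_unique2[OF grp[unfolded termeq] rhs] .
  with main show ?thesis by simp
qed

end
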